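(* Every strongly homogeneous separable metrizable zero-dimensional space is strongly discrete homogeneous. In particular, the Cantor set $\mathbb C$, the rationals $\mathbb Q$, the irrationals $\mathbb P$, $\mathbb C\times\mathbb Q$ and $\mathbb C\times\mathbb P$ are strongly discrete homogeneous.
   Context: A Hausdorff space is strongly homogeneous if all of its nonempty clopen subspaces are homeomorphic to each other. A subset $D$ of $X$ is discrete if each point of $X$ has a neighbourhood containing at most one point of $D$. A Hausdorff space $X$ is strongly discrete homogeneous (sDH) if for any two discrete subsets $A,B$ of $X$ and any bijection $f\colon A\to B$, $f$ extends to a homeomorphism of $X$ onto itself. *)

theory Defs
  imports "HOL-Analysis.Analysis"
begin

definition strongly_homogeneous :: "'a topology \<Rightarrow> bool" where
  "strongly_homogeneous X \<longleftrightarrow> Hausdorff_space X \<and>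
     (\<forall>U V. closedin X U \<and> openin X U \<and> U \<noteq> {} \<and> closedin X V \<and> openin X V \<and> V \<noteq> {} \<longrightarrow>
        subtopology X U homeomorphic_space subtopology X V)"

definition discrete_subset :: "'a topology \<Rightarrow> 'a set \<Rightarrow> bool" where
  "discrete_subset X D \<longleftrightarrow> D \<subseteq> topspace X \<and>
     (\<forall>x\<in>topspace X. \<exists>U. openin X U \<and> x \<in> U \<and>
        (\<forall>a\<in>U \<inter> D. \<forall>b\<in>U \<inter> D. a = b))"

definition strongly_discrete_homogeneous :: "'a topology \<Rightarrow> bool" where
  "strongly_discrete_homogeneous X \<longleftrightarrow> Hausdorff_space X \<and>
     (\<forall>A B f. discrete_subset X A \<and> discrete_subset X B \<and> bij_betw f A B \<longrightarrow>
        (\<exists>h. homeomorphic_map X X h \<and> (\<forall>a\<in>A. h a = f a)))"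

end

theory Submission
  imports Defs
begin


lemma (in Metric_space) sep_Lindelof:
  assumes "separable_space mtopology"
  shows "Lindelof_space mtopology"
proof -
  obtain C where C: "countable C" "C \<subseteq> M" "mtopology closure_of C = M"
    using assms unfolding separable_space_def by auto
  define B where "B = (\<lambda>(c,n). mball c (1 / real (Suc n))) ` (C \<times> (UNIV::nat set))"
  have "countable B" unfolding B_def using C(1) by auto
  moreover have "\<forall>V\<in>B. openin mtopology V" unfolding B_def by auto
  moreover have "neighbourhood_base_of (\<lambda>A. A \<in> B) mtopology"
    unfolding neighbourhood_base_of
  proof (intro allI impI)
    fix W x assume "openin mtopology W \<and> x \<in> W"
    then have W: "openin mtopology W" "x \<in> W" by auto
    then obtain r where r: "r > 0" "mball x r \<subseteq> W" "x \<in> M"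
      using openin_mtopology by (metis openin_subset subsetD topspace_mtopology)
    obtain n where n: "1 / real (Suc n) < r / 2"
      using r(1) by (metis half_gt_zero_iff nat_approx_posE)
    have "x \<in> mtopology closure_of C" using C(3) r(3) by simp
    then obtain c where c: "c \<in> C" "c \<in> mball x (1 / real (Suc n))"
      unfolding in_closure_of by (meson centre_in_mball_iff openin_mball r(3) of_nat_0_less_iff zero_less_Suc divide_pos_pos zero_less_one)
    have cM: "c \<in> M" using c C(2) by auto
    have dxc: "d x c < 1 / real (Suc n)" using c by simp
    have sub: "mball c (1 / real (Suc n)) \<subseteq> mball x r"
      by (rule mball_subset) (use dxc n r(3) commute in auto)
    show "\<exists>U V. openin mtopology U \<and> V \<in> B \<and> x \<in> U \<and> U \<subseteq> V \<and> V \<subseteq> W"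
      apply (rule exI[of _ "mball c (1 / real (Suc n))"], rule exI[of _ "mball c (1 / real (Suc n))"])
      using c cM dxc sub r commute unfolding B_def by auto
  qed
  ultimately have "second_countable mtopology"
    unfolding second_countable_neighbourhood_base_alt by blast
  then show ?thesis by (rule second_countable_imp_Lindelof_space)
qed

lemma sep_metrizable_Lindelof:
  assumes "separable_space X" "metrizable_space X"
  shows "Lindelof_space X"
  using assms Metric_space.sep_Lindelof unfolding metrizable_space_def by metis



abbreviation clopen :: "'a topology \<Rightarrow> 'a set \<Rightarrow> bool" where
  "clopen X U \<equiv> closedin X U \<and> openin X U"

lemma SH_Hausdorff: "strongly_homogeneous X \<Longrightarrow> Hausdorff_space X"
  unfolding strongly_homogeneous_def by blast

lemma SH_homeo:
  assumes "strongly_homogeneous X" "closedin X U" "openin X U" "U \<noteq> {}"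
     "closedin X V" "openin X V" "V \<noteq> {}"
  shows "subtopology X U homeomorphic_space subtopology X V"
  using assms unfolding strongly_homogeneous_def by blast

lemma SH_subtopology:
  assumes "strongly_homogeneous X" "closedin X U" "openin X U"
  shows "strongly_homogeneous (subtopology X U)"
  unfolding strongly_homogeneous_def
proof (intro conjI allI impI)
  show "Hausdorff_space (subtopology X U)"
    using assms(1) Hausdorff_space_subtopology SH_Hausdorff by blast
  fix V W
  assume h: "closedin (subtopology X U) V \<and> openin (subtopology X U) V \<and> V \<noteq> {} \<and> closedin (subtopology X U) W \<and> openin (subtopology X U) W \<and> W \<noteq> {}"
  have c: "clopen X V" "clopen X W"
    using h assms(2,3) closedin_trans_full openin_trans_full by metis+
  have s: "V \<subseteq> U" "W \<subseteq> U" using h closedin_subset[of "subtopology X U" V] closedin_subset[of "subtopology X U" W] by auto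
  have "subtopology X V homeomorphic_space subtopology X W"
    using SH_homeo[OF assms(1)] c h by blast
  then show "subtopology (subtopology X U) V homeomorphic_space subtopology (subtopology X U) W"
    using s by (simp add: subtopology_subtopology inf_absorb2)
qed

lemma SH_isolated:
  assumes "strongly_homogeneous X" "x \<in> topspace X" "openin X {x}"
  shows "topspace X = {x}"
proof -
  have H: "Hausdorff_space X" using assms(1) SH_Hausdorff by blast
  have "closedin X {x}" using closedin_t1_singleton[OF Hausdorff_imp_t1_space[OF H] assms(2)] .
  then have "subtopology X {x} homeomorphic_space subtopology X (topspace X)"
    by (rule SH_homeo[OF assms(1)]) (use assms \<open>closedin X {x}\<close> in auto)
  then obtain g where "homeomorphic_map (subtopology X {x}) X g"
    by (auto simp: homeomorphic_space)
  then have "g ` {x} = topspace X"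
    using assms(2) homeomorphic_imp_surjective_map[of "subtopology X {x}" X g] by (simp add: topspace_subtopology_subset)
  then show ?thesis using assms(2) by (metis image_empty image_insert singletonD)
qed



lemma dim0_clopen:
  assumes "X dim_le 0" "openin X W" "x \<in> W"
  obtains V where "closedin X V" "openin X V" "x \<in> V" "V \<subseteq> W"
proof -
  have "neighbourhood_base_of (\<lambda>U. closedin X U \<and> openin X U) X"
    using assms(1) dimension_le_0_neighbourhood_base_of_clopen by blast
  then obtain U V where "openin X U" "closedin X V \<and> openin X V" "x \<in> U" "U \<subseteq> V" "V \<subseteq> W"
    using assms(2,3) unfolding neighbourhood_base_of by meson
  then show ?thesis using that by blast
qed

lemma clopen_seq:
  assumes T1: "t1_space X" and fc: "first_countable X" and d0: "X dim_le 0"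
    and x: "x \<in> topspace X" and noiso: "\<And>z. z \<in> topspace X \<Longrightarrow> \<not> openin X {z}"
  obtains U :: "nat \<Rightarrow> 'a set" where "U 0 = topspace X" "\<And>n. closedin X (U n)" "\<And>n. openin X (U n)"
    "\<And>n. x \<in> U n" "\<And>n. U (Suc n) \<subseteq> U n" "\<And>n. U n - U (Suc n) \<noteq> {}"
    "\<And>W. openin X W \<Longrightarrow> x \<in> W \<Longrightarrow> \<exists>n. U n \<subseteq> W"
proof -
  obtain \<B>0 where B0: "countable \<B>0" "\<And>V. V \<in> \<B>0 \<Longrightarrow> openin X V"
    "\<And>W. openin X W \<Longrightarrow> x \<in> W \<Longrightarrow> \<exists>V\<in>\<B>0. x \<in> V \<and> V \<subseteq> W"
    using fc x unfolding first_countable_def by metis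
  define \<B> where "\<B> = {V\<in>\<B>0. x \<in> V}"
  have B: "countable \<B>" "\<And>V. V \<in> \<B> \<Longrightarrow> openin X V"
    "\<And>W. openin X W \<Longrightarrow> x \<in> W \<Longrightarrow> \<exists>V\<in>\<B>. x \<in> V \<and> V \<subseteq> W"
    "\<And>V. V \<in> \<B> \<Longrightarrow> x \<in> V"
    unfolding \<B>_def using B0 by (auto, metis)
  have Bne: "\<B> \<noteq> {}" using B(3)[of "topspace X"] x by auto
  define b where "b = from_nat_into \<B>"
  have bB: "b n \<in> \<B>" for n using Bne b_def from_nat_into by metis
  have bsurj: "\<exists>n. b n = V" if "V \<in> \<B>" for V using B(1) that b_def from_nat_into_surj by metis
  have step: "\<exists>T. closedin X T \<and> openin X T \<and> x \<in> T \<and> T \<subseteq> S \<inter> b n \<and> S - T \<noteq> {}"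
    if S: "closedin X S" "openin X S" "x \<in> S" for S n
  proof -
    have o: "openin X (S \<inter> b n)" using S(2) B(2) bB by blast
    have xin: "x \<in> b n" using bB B(4) by blast
    have "S \<inter> b n \<noteq> {x}" using o noiso x by metis
    then obtain z where z: "z \<in> S \<inter> b n" "z \<noteq> x" using xin S(3) by blast
    have zt: "z \<in> topspace X" using z(1) S(2) openin_subset by blast
    have o2: "openin X (S \<inter> b n - {z})"
      using o closedin_t1_singleton[OF T1 zt] by (simp add: openin_diff)
    obtain T where T: "closedin X T" "openin X T" "x \<in> T" "T \<subseteq> S \<inter> b n - {z}"
      using dim0_clopen[OF d0 o2] xin S(3) z(2) by blast
    show ?thesis
      using T z by blast
  qed
  obtain F where F: "\<And>n S. closedin X S \<and> openin X S \<and> x \<in> S \<Longrightarrow>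
      closedin X (F n S) \<and> openin X (F n S) \<and> x \<in> F n S \<and> F n S \<subseteq> S \<inter> b n \<and> S - F n S \<noteq> {}"
  proof -
    define F where "F n S = (SOME T. closedin X T \<and> openin X T \<and> x \<in> T \<and> T \<subseteq> S \<inter> b n \<and> S - T \<noteq> {})" for n S
    have "closedin X (F n S) \<and> openin X (F n S) \<and> x \<in> F n S \<and> F n S \<subseteq> S \<inter> b n \<and> S - F n S \<noteq> {}"
      if "closedin X S \<and> openin X S \<and> x \<in> S" for n S
      unfolding F_def using someI_ex[OF step[of S n]] that by blast
    then show ?thesis by (rule that)
  qed
  define U where "U = rec_nat (topspace X) F"
  have U0: "U 0 = topspace X" and US: "U (Suc n) = F n (U n)" for n by (simp_all add: U_def)
  have inv: "closedin X (U n) \<and> openin X (U n) \<and> x \<in> U n" for n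
  proof (induction n)
    case 0 then show ?case using U0 x by simp
  next
    case (Suc n) then show ?case using F[of "U n" n] US by simp
  qed
  have FF: "U (Suc n) \<subseteq> U n \<inter> b n \<and> U n - U (Suc n) \<noteq> {}" for n
    using F[of "U n" n] inv[of n] US by simp
  show ?thesis
  proof (rule that)
    show "U 0 = topspace X" by (rule U0)
    show "closedin X (U n)" "openin X (U n)" "x \<in> U n" for n using inv by auto
    show "U (Suc n) \<subseteq> U n" "U n - U (Suc n) \<noteq> {}" for n using FF by auto
    show "\<exists>n. U n \<subseteq> W" if W: "openin X W" "x \<in> W" for W
    proof -
      obtain V where "V \<in> \<B>" "V \<subseteq> W" using B(3)[OF W] by blast
      then obtain n where "b n = V" using bsurj[OF \<open>V \<in> \<B>\<close>] by blast
      then have "U (Suc n) \<subseteq> W" using FF[of n] \<open>V \<subseteq> W\<close> by auto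
      then show ?thesis by blast
    qed
  qed
qed


definition nbseq :: "'a topology \<Rightarrow> 'a \<Rightarrow> (nat \<Rightarrow> 'a set) \<Rightarrow> bool" where
  "nbseq X x U \<longleftrightarrow> U 0 = topspace X \<and> (\<forall>n. openin X (U n) \<and> closedin X (U n) \<and> x \<in> U n \<and> U (Suc n) \<subseteq> U n)
     \<and> (\<forall>W. openin X W \<and> x \<in> W \<longrightarrow> (\<exists>n. U n \<subseteq> W))"

definition idx :: "(nat \<Rightarrow> 'a set) \<Rightarrow> 'a \<Rightarrow> nat" where
  "idx U z = (LEAST n. z \<notin> U (Suc n))"

definition glue :: "'a \<Rightarrow> 'a \<Rightarrow> (nat \<Rightarrow> 'a set) \<Rightarrow> (nat \<Rightarrow> 'a \<Rightarrow> 'a) \<Rightarrow> 'a \<Rightarrow> 'a" where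
  "glue x y U \<phi> z = (if z = x then y else \<phi> (idx U z) z)"

lemma nbseq_dec: "nbseq X x U \<Longrightarrow> m \<le> n \<Longrightarrow> U n \<subseteq> U m"
  unfolding nbseq_def by (metis lift_Suc_antimono_le)

lemma idx_unique:
  assumes "nbseq X x U" "z \<in> U m" "z \<notin> U (Suc m)"
  shows "idx U z = m"
  unfolding idx_def
proof (rule Least_equality)
  show "z \<notin> U (Suc m)" by fact
  show "m \<le> n" if "z \<notin> U (Suc n)" for n
  proof (rule ccontr)
    assume "\<not> m \<le> n"
    then have "Suc n \<le> m" by simp
    then have "U m \<subseteq> U (Suc n)" using nbseq_dec[OF assms(1)] by blast
    then show False using that assms(2) by blast
  qed
qed

lemma idx_props:
  assumes "nbseq X x U" "t1_space X" "z \<in> topspace X" "z \<noteq> x"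
  shows "z \<in> U (idx U z)" "z \<notin> U (Suc (idx U z))"
proof -
  have x: "x \<in> topspace X" using assms(1) unfolding nbseq_def by auto
  have "openin X (topspace X - {z})"
    using closedin_t1_singleton[OF assms(2,3)] by (simp add: openin_diff)
  then obtain n where n: "U n \<subseteq> topspace X - {z}"
    using assms(1,4) x unfolding nbseq_def by blast
  then have "z \<notin> U n" by blast
  then have "n \<noteq> 0" using assms(1,3) unfolding nbseq_def by (metis)
  then obtain m where "n = Suc m" using not0_implies_Suc by blast
  then have ex: "z \<notin> U (Suc m)" using \<open>z \<notin> U n\<close> by simp
  show z2: "z \<notin> U (Suc (idx U z))" unfolding idx_def by (rule LeastI[of _ m]) (rule ex)
  show "z \<in> U (idx U z)"
  proof (cases "idx U z")
    case 0 then show ?thesis using assms(1,3) unfolding nbseq_def by auto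
  next
    case (Suc j)
    have "\<not> (z \<notin> U (Suc j))"
    proof
      assume "z \<notin> U (Suc j)"
      then have "idx U z \<le> j" unfolding idx_def by (rule Least_le)
      then show False using Suc by simp
    qed
    then show ?thesis using Suc by simp
  qed
qed

lemma glue_cont:
  assumes U: "nbseq X x U" and V: "nbseq X y V" and T1: "t1_space X"
    and cont: "\<And>n. continuous_map (subtopology X (U n - U (Suc n))) X (\<phi> n)"
    and img: "\<And>n. \<phi> n ` (U n - U (Suc n)) \<subseteq> V n - V (Suc n)"
  shows "continuous_map X X (glue x y U \<phi>)"
  unfolding continuous_map_openin_preimage_eq
proof (intro conjI allI impI)
  have Vt: "V n \<subseteq> topspace X" for n using V unfolding nbseq_def by (metis openin_subset)
  have yt: "y \<in> topspace X" using V unfolding nbseq_def by auto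
  have Uo: "openin X (U n - U (Suc n))" for n using U unfolding nbseq_def by (simp add: openin_diff)
  have hval: "glue x y U \<phi> z = \<phi> k z" if "z \<in> U k" "z \<notin> U (Suc k)" for z k
  proof -
    have "z \<noteq> x" using that U unfolding nbseq_def by auto
    then show ?thesis using idx_unique[OF U that] unfolding glue_def by simp
  qed
  have hin: "glue x y U \<phi> z \<in> V k" if "z \<in> U k" "z \<notin> U (Suc k)" for z k
    using hval[OF that] img[of k] that by blast
  have idxz: "z \<in> U (idx U z)" "z \<notin> U (Suc (idx U z))" if "z \<in> topspace X" "z \<noteq> x" for z
    using idx_props[OF U T1 that] by auto
  show "glue x y U \<phi> \<in> topspace X \<rightarrow> topspace X"
  proof
    fix z assume z: "z \<in> topspace X"
    show "glue x y U \<phi> z \<in> topspace X"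
    proof (cases "z = x")
      case True then show ?thesis using yt unfolding glue_def by simp
    next
      case False then show ?thesis using hin[OF idxz[OF z False]] Vt by blast
    qed
  qed
  fix G assume G: "openin X G"
  show "openin X (topspace X \<inter> glue x y U \<phi> -` G)"
    unfolding openin_subopen[of X "topspace X \<inter> glue x y U \<phi> -` G"]
  proof
    fix z assume zO: "z \<in> topspace X \<inter> glue x y U \<phi> -` G"
    show "\<exists>T. openin X T \<and> z \<in> T \<and> T \<subseteq> topspace X \<inter> glue x y U \<phi> -` G"
    proof (cases "z = x")
      case True
      then have "y \<in> G" using zO unfolding glue_def by simp
      then obtain n where n: "V n \<subseteq> G" using V G unfolding nbseq_def by blast
      have "U n \<subseteq> topspace X \<inter> glue x y U \<phi> -` G"
      proof
        fix w assume w: "w \<in> U n"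
        have wt: "w \<in> topspace X" using w U unfolding nbseq_def by (metis openin_subset subsetD)
        show "w \<in> topspace X \<inter> glue x y U \<phi> -` G"
        proof (cases "w = x")
          case True then show ?thesis using wt \<open>y \<in> G\<close> unfolding glue_def by simp
        next
          case False
          let ?k = "idx U w"
          have k: "w \<in> U ?k" "w \<notin> U (Suc ?k)" using idxz[OF wt False] by auto
          have "n \<le> ?k"
          proof (rule ccontr)
            assume "\<not> n \<le> ?k"
            then have "U n \<subseteq> U (Suc ?k)" using nbseq_dec[OF U] by simp
            then show False using w k by blast
          qed
          then have "V ?k \<subseteq> V n" using nbseq_dec[OF V] by blast
          then show ?thesis using hin[OF k] n wt by blast
        qed
      qed
      moreover have "openin X (U n)" "z \<in> U n" using U True unfolding nbseq_def by auto
      ultimately show ?thesis by blast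
    next
      case False
      have zt: "z \<in> topspace X" using zO by blast
      let ?k = "idx U z"
      have k: "z \<in> U ?k" "z \<notin> U (Suc ?k)" using idxz[OF zt False] by auto
      let ?P = "U ?k - U (Suc ?k)"
      have "openin (subtopology X ?P) (topspace (subtopology X ?P) \<inter> \<phi> ?k -` G)"
        using cont[of ?k] G unfolding continuous_map_openin_preimage_eq by blast
      then have "openin X (topspace (subtopology X ?P) \<inter> \<phi> ?k -` G)"
        using Uo[of ?k] openin_trans_full by blast
      moreover have "z \<in> topspace (subtopology X ?P) \<inter> \<phi> ?k -` G"
        using zO k zt hval[OF k] by auto
      moreover have "topspace (subtopology X ?P) \<inter> \<phi> ?k -` G \<subseteq> topspace X \<inter> glue x y U \<phi> -` G"
        using hval by auto
      ultimately show ?thesis by blast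
    qed
  qed
qed

lemma glue_inv:
  assumes U: "nbseq X x U" and V: "nbseq X y V" and T1: "t1_space X"
    and img: "\<And>n. \<phi> n ` (U n - U (Suc n)) \<subseteq> V n - V (Suc n)"
    and inv: "\<And>n z. z \<in> U n - U (Suc n) \<Longrightarrow> \<psi> n (\<phi> n z) = z"
    and z: "z \<in> topspace X"
  shows "glue y x V \<psi> (glue x y U \<phi> z) = z"
proof (cases "z = x")
  case True then show ?thesis unfolding glue_def by simp
next
  case False
  let ?k = "idx U z"
  have k: "z \<in> U ?k" "z \<notin> U (Suc ?k)" using idx_props[OF U T1 z False] by auto
  have h: "glue x y U \<phi> z = \<phi> ?k z" using False unfolding glue_def by simp
  have w: "\<phi> ?k z \<in> V ?k" "\<phi> ?k z \<notin> V (Suc ?k)" using img[of ?k] k by auto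
  have "\<phi> ?k z \<noteq> y" using w V unfolding nbseq_def by auto
  then have "glue y x V \<psi> (\<phi> ?k z) = \<psi> ?k (\<phi> ?k z)"
    using idx_unique[OF V w] unfolding glue_def by simp
  then show ?thesis using h inv k by simp
qed



lemma clopen_partition:
  assumes L: "Lindelof_space X" and d0: "X dim_le 0" and A: "discrete_subset X A"
  obtains c :: "nat \<Rightarrow> 'a set" where "\<And>n. closedin X (c n)" "\<And>n. openin X (c n)"
    "\<And>m n. m \<noteq> n \<Longrightarrow> c m \<inter> c n = {}" "\<And>z. z \<in> topspace X \<Longrightarrow> \<exists>n. z \<in> c n"
    "\<And>n a b. a \<in> c n \<inter> A \<Longrightarrow> b \<in> c n \<inter> A \<Longrightarrow> a = b"
proof -
  define \<U> where "\<U> = {C. closedin X C \<and> openin X C \<and> (\<forall>a\<in>C \<inter> A. \<forall>b\<in>C \<inter> A. a = b)}"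
  have ex: "\<exists>C\<in>\<U>. x \<in> C" if x: "x \<in> topspace X" for x
  proof -
    have "\<forall>x\<in>topspace X. \<exists>U. openin X U \<and> x \<in> U \<and> (\<forall>a\<in>U \<inter> A. \<forall>b\<in>U \<inter> A. a = b)"
      using A unfolding discrete_subset_def by (elim conjE)
    then obtain W where W: "openin X W" "x \<in> W" "\<forall>a\<in>W \<inter> A. \<forall>b\<in>W \<inter> A. a = b"
      using x by metis
    obtain C where C: "closedin X C" "openin X C" "x \<in> C" "C \<subseteq> W"
      using dim0_clopen[OF d0 W(1,2)] by metis
    have "\<forall>a\<in>C \<inter> A. \<forall>b\<in>C \<inter> A. a = b" using W(3) C(4) by auto
    then have "C \<in> \<U>" unfolding \<U>_def using C by simp
    then show ?thesis using C(3) by blast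
  qed
  have Uo: "\<And>U. U \<in> \<U> \<Longrightarrow> openin X U" unfolding \<U>_def by blast
  have cov: "\<Union>\<U> = topspace X"
  proof -
    have "\<Union>\<U> \<subseteq> topspace X" using Uo openin_subset by blast
    moreover have "topspace X \<subseteq> \<Union>\<U>" using ex by blast
    ultimately show ?thesis by blast
  qed
  obtain \<V> where V: "countable \<V>" "\<V> \<subseteq> \<U>" "\<Union>\<V> = topspace X"
  proof -
    from Lindelof_spaceD[OF L Uo cov] obtain \<V> where "countable \<V>" "\<V> \<subseteq> \<U>" "\<Union>\<V> = topspace X" by auto
    then show ?thesis using that by auto
  qed
  show ?thesis
  proof (cases "\<V> = {}")
    case True
    show ?thesis by (rule that[of "\<lambda>n. {}"]) (use True V in auto)
  next
    case False
    define e where "e = from_nat_into \<V>"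
    have eV: "e n \<in> \<V>" for n using False e_def from_nat_into by metis
    have esurj: "\<exists>n. e n = W" if "W \<in> \<V>" for W using V(1) that e_def from_nat_into_surj by metis
    have eU: "closedin X (e n) \<and> openin X (e n) \<and> (\<forall>a\<in>e n \<inter> A. \<forall>b\<in>e n \<inter> A. a = b)" for n
      using eV[of n] V(2) unfolding \<U>_def by blast
    define c where "c n = e n - \<Union>(e ` {..<n})" for n
    show ?thesis
    proof (rule that[of c])
      fix n
      have "closedin X (\<Union>(e ` {..<n}))" by (rule closedin_Union) (use eU in auto)
      moreover have "openin X (\<Union>(e ` {..<n}))" by (rule openin_Union) (use eU in auto)
      ultimately show "closedin X (c n)" "openin X (c n)"
        unfolding c_def using eU[of n] by (auto intro: closedin_diff openin_diff)
    next
      fix m n :: nat assume "m \<noteq> n"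
      then consider "m < n" | "n < m" by linarith
      then show "c m \<inter> c n = {}" unfolding c_def by cases auto
    next
      fix z assume z: "z \<in> topspace X"
      then obtain W where "W \<in> \<V>" "z \<in> W" using V(3) by blast
      then obtain n where n: "z \<in> e n" using esurj by blast
      define k where "k = (LEAST n. z \<in> e n)"
      have "z \<in> e k" unfolding k_def using n by (rule LeastI)
      moreover have "z \<notin> e j" if "j < k" for j using not_less_Least[of j "\<lambda>n. z \<in> e n"] that k_def by blast
      ultimately have "z \<in> c k" unfolding c_def by auto
      then show "\<exists>n. z \<in> c n" by blast
    next
      fix n a b assume "a \<in> c n \<inter> A" "b \<in> c n \<inter> A"
      then show "a = b" using eU[of n] unfolding c_def by blast
    qed
  qed
qed



lemma hm_extract:
  assumes "homeomorphic_maps (subtopology X P) (subtopology X Q) f g" "P \<subseteq> topspace X" "Q \<subseteq> topspace X"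
  shows "continuous_map (subtopology X P) X f" "f ` P \<subseteq> Q" "\<And>z. z \<in> P \<Longrightarrow> g (f z) = z"
proof -
  have c: "continuous_map (subtopology X P) (subtopology X Q) f"
    using assms(1) unfolding homeomorphic_maps_def by blast
  then show "continuous_map (subtopology X P) X f"
    using continuous_map_in_subtopology by blast
  show "f ` P \<subseteq> Q"
    using continuous_map_image_subset_topspace[OF c] assms(2,3) by (simp add: Int_absorb1 inf.absorb2)
  show "g (f z) = z" if "z \<in> P" for z
    using assms(1,2) that unfolding homeomorphic_maps_def by (auto simp: topspace_subtopology_subset)
qed

lemma SH_homogeneous:
  assumes SH: "strongly_homogeneous X" and mX: "metrizable_space X" and d0: "X dim_le 0"
    and x: "x \<in> topspace X" and y: "y \<in> topspace X"
  shows "\<exists>h. homeomorphic_map X X h \<and> h x = y"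
proof (cases "x = y")
  case True then show ?thesis using homeomorphic_map_id[of X X] by (metis id_apply)
next
  case False
  have H: "Hausdorff_space X" using SH SH_Hausdorff by blast
  have T1: "t1_space X" using H Hausdorff_imp_t1_space by blast
  have fc: "first_countable X" using mX metrizable_imp_first_countable by blast
  have noiso: "\<not> openin X {z}" if "z \<in> topspace X" for z
    using SH_isolated[OF SH that] x y False by auto
  obtain U where U: "U 0 = topspace X" "\<And>n. closedin X (U n)" "\<And>n. openin X (U n)"
    "\<And>n. x \<in> U n" "\<And>n. U (Suc n) \<subseteq> U n" "\<And>n. U n - U (Suc n) \<noteq> {}"
    "\<And>W. openin X W \<Longrightarrow> x \<in> W \<Longrightarrow> \<exists>n. U n \<subseteq> W"
    using clopen_seq[OF T1 fc d0 x noiso] by blast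
  obtain V where V: "V 0 = topspace X" "\<And>n. closedin X (V n)" "\<And>n. openin X (V n)"
    "\<And>n. y \<in> V n" "\<And>n. V (Suc n) \<subseteq> V n" "\<And>n. V n - V (Suc n) \<noteq> {}"
    "\<And>W. openin X W \<Longrightarrow> y \<in> W \<Longrightarrow> \<exists>n. V n \<subseteq> W"
    using clopen_seq[OF T1 fc d0 y noiso] by blast
  have nU: "nbseq X x U" unfolding nbseq_def using U by blast
  have nV: "nbseq X y V" unfolding nbseq_def using V by blast
  have "\<forall>n. \<exists>f g. homeomorphic_maps (subtopology X (U n - U (Suc n))) (subtopology X (V n - V (Suc n))) f g"
  proof
    fix n
    have "subtopology X (U n - U (Suc n)) homeomorphic_space subtopology X (V n - V (Suc n))"
      by (rule SH_homeo[OF SH]) (use U V in \<open>auto intro: closedin_diff openin_diff\<close>)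
    then show "\<exists>f g. homeomorphic_maps (subtopology X (U n - U (Suc n))) (subtopology X (V n - V (Suc n))) f g"
      unfolding homeomorphic_space_def .
  qed
  then obtain \<phi> where "\<forall>n. \<exists>g. homeomorphic_maps (subtopology X (U n - U (Suc n))) (subtopology X (V n - V (Suc n))) (\<phi> n) g"
    by (rule choice[THEN exE]) blast
  then obtain \<psi> where hm: "\<And>n. homeomorphic_maps (subtopology X (U n - U (Suc n))) (subtopology X (V n - V (Suc n))) (\<phi> n) (\<psi> n)"
    by (rule choice[THEN exE]) blast
  have hm': "homeomorphic_maps (subtopology X (V n - V (Suc n))) (subtopology X (U n - U (Suc n))) (\<psi> n) (\<phi> n)" for n
    using hm[of n] homeomorphic_maps_sym by blast
  have Ut: "U n - U (Suc n) \<subseteq> topspace X" for n using U(3) openin_subset by blast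
  have Vt: "V n - V (Suc n) \<subseteq> topspace X" for n using V(3) openin_subset by blast
  note e1 = hm_extract[OF hm Ut Vt]
  note e2 = hm_extract[OF hm' Vt Ut]
  have "homeomorphic_maps X X (glue x y U \<phi>) (glue y x V \<psi>)"
    unfolding homeomorphic_maps_def
  proof (intro conjI ballI)
    show "continuous_map X X (glue x y U \<phi>)" by (rule glue_cont[OF nU nV T1 e1(1) e1(2)])
    show "continuous_map X X (glue y x V \<psi>)" by (rule glue_cont[OF nV nU T1 e2(1) e2(2)])
    show "glue y x V \<psi> (glue x y U \<phi> z) = z" if "z \<in> topspace X" for z
      by (rule glue_inv[OF nU nV T1 e1(2) e1(3) that])
    show "glue x y U \<phi> (glue y x V \<psi> z) = z" if "z \<in> topspace X" for z
      by (rule glue_inv[OF nV nU T1 e2(2) e2(3) that])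
  qed
  then show ?thesis unfolding homeomorphic_map_maps glue_def by auto
qed



lemma glue_partition_cont:
  assumes Do: "\<And>i. i \<in> I \<Longrightarrow> openin X (D i)"
    and Dd: "\<And>i j. i \<in> I \<Longrightarrow> j \<in> I \<Longrightarrow> i \<noteq> j \<Longrightarrow> D i \<inter> D j = {}"
    and Dc: "topspace X \<subseteq> \<Union>(D ` I)"
    and cont: "\<And>i. i \<in> I \<Longrightarrow> continuous_map (subtopology X (D i)) X (f i)"
  shows "continuous_map X X (\<lambda>z. f (SOME i. i \<in> I \<and> z \<in> D i) z)"
proof (rule pasting_lemma[where T=D and I=I and f=f])
  show "openin X (D i)" if "i \<in> I" for i using Do that .
  show "continuous_map (subtopology X (D i)) X (f i)" if "i \<in> I" for i using cont that .
  show "f i x = f j x" if "i \<in> I" "j \<in> I" "x \<in> topspace X \<inter> D i \<inter> D j" for i j x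
    using Dd[of i j] that by blast
  show "\<exists>j. j \<in> I \<and> x \<in> D j \<and> f (SOME i. i \<in> I \<and> x \<in> D i) x = f j x" if "x \<in> topspace X" for x
  proof -
    have "\<exists>i. i \<in> I \<and> x \<in> D i" using Dc that by blast
    then have "(SOME i. i \<in> I \<and> x \<in> D i) \<in> I \<and> x \<in> D (SOME i. i \<in> I \<and> x \<in> D i)" by (rule someI_ex)
    then show ?thesis by blast
  qed
qed

lemma some_unique:
  assumes "\<And>i j. i \<in> I \<Longrightarrow> j \<in> I \<Longrightarrow> i \<noteq> j \<Longrightarrow> D i \<inter> D j = {}" "k \<in> I" "z \<in> D k"
  shows "(SOME i. i \<in> I \<and> z \<in> D i) = k"
proof (rule some_equality)
  show "k \<in> I \<and> z \<in> D k" using assms by blast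
  show "i = k" if "i \<in> I \<and> z \<in> D i" for i using assms that by blast
qed

lemma glue_partition:
  assumes Do: "\<And>i. i \<in> I \<Longrightarrow> openin X (D i)"
    and Dd: "\<And>i j. i \<in> I \<Longrightarrow> j \<in> I \<Longrightarrow> i \<noteq> j \<Longrightarrow> D i \<inter> D j = {}"
    and Dc: "topspace X \<subseteq> \<Union>(D ` I)"
    and Eo: "\<And>i. i \<in> I \<Longrightarrow> openin X (E i)"
    and Ed: "\<And>i j. i \<in> I \<Longrightarrow> j \<in> I \<Longrightarrow> i \<noteq> j \<Longrightarrow> E i \<inter> E j = {}"
    and Ec: "topspace X \<subseteq> \<Union>(E ` I)"
    and hm: "\<And>i. i \<in> I \<Longrightarrow> homeomorphic_maps (subtopology X (D i)) (subtopology X (E i)) (f i) (g i)"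
  shows "homeomorphic_maps X X (\<lambda>z. f (SOME i. i \<in> I \<and> z \<in> D i) z) (\<lambda>z. g (SOME i. i \<in> I \<and> z \<in> E i) z)"
proof -
  have Dt: "D i \<subseteq> topspace X" if "i \<in> I" for i using Do[OF that] openin_subset by blast
  have Et: "E i \<subseteq> topspace X" if "i \<in> I" for i using Eo[OF that] openin_subset by blast
  have hm': "homeomorphic_maps (subtopology X (E i)) (subtopology X (D i)) (g i) (f i)" if "i \<in> I" for i
    using hm[OF that] homeomorphic_maps_sym by blast
  have e1: "continuous_map (subtopology X (D i)) X (f i)" "f i ` D i \<subseteq> E i" "\<And>z. z \<in> D i \<Longrightarrow> g i (f i z) = z"
    if "i \<in> I" for i using hm_extract[OF hm[OF that] Dt[OF that] Et[OF that]] by auto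
  have e2: "continuous_map (subtopology X (E i)) X (g i)" "g i ` E i \<subseteq> D i" "\<And>z. z \<in> E i \<Longrightarrow> f i (g i z) = z"
    if "i \<in> I" for i using hm_extract[OF hm'[OF that] Et[OF that] Dt[OF that]] by auto
  show ?thesis
    unfolding homeomorphic_maps_def
  proof (intro conjI ballI)
    show "continuous_map X X (\<lambda>z. f (SOME i. i \<in> I \<and> z \<in> D i) z)"
      by (rule glue_partition_cont[OF Do Dd Dc e1(1)])
    show "continuous_map X X (\<lambda>z. g (SOME i. i \<in> I \<and> z \<in> E i) z)"
      by (rule glue_partition_cont[OF Eo Ed Ec e2(1)])
    show "g (SOME i. i \<in> I \<and> f (SOME i. i \<in> I \<and> z \<in> D i) z \<in> E i) (f (SOME i. i \<in> I \<and> z \<in> D i) z) = z"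
      if z: "z \<in> topspace X" for z
    proof -
      obtain k where k: "k \<in> I" "z \<in> D k" using Dc z by blast
      have s1: "(SOME i. i \<in> I \<and> z \<in> D i) = k" by (rule some_unique[of I D k z, OF Dd k])
      have fz: "f k z \<in> E k" using e1(2)[OF k(1)] k(2) by blast
      have s2: "(SOME i. i \<in> I \<and> f k z \<in> E i) = k" by (rule some_unique[of I E k "f k z", OF Ed k(1) fz])
      show ?thesis unfolding s1 s2 using e1(3)[OF k] .
    qed
    show "f (SOME i. i \<in> I \<and> g (SOME i. i \<in> I \<and> z \<in> E i) z \<in> D i) (g (SOME i. i \<in> I \<and> z \<in> E i) z) = z"
      if z: "z \<in> topspace X" for z
    proof -
      obtain k where k: "k \<in> I" "z \<in> E k" using Ec z by blast
      have s1: "(SOME i. i \<in> I \<and> z \<in> E i) = k" by (rule some_unique[of I E k z, OF Ed k])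
      have gz: "g k z \<in> D k" using e2(2)[OF k(1)] k(2) by blast
      have s2: "(SOME i. i \<in> I \<and> g k z \<in> D i) = k" by (rule some_unique[of I D k "g k z", OF Dd k(1) gz])
      show ?thesis unfolding s1 s2 using e2(3)[OF k] .
    qed
  qed
qed

lemma homeo_pt:
  assumes SH: "strongly_homogeneous X" and mX: "metrizable_space X" and d0: "X dim_le 0"
    and P: "closedin X P" "openin X P" and Q: "closedin X Q" "openin X Q" and a: "a \<in> P" and b: "b \<in> Q"
  shows "\<exists>f g. homeomorphic_maps (subtopology X P) (subtopology X Q) f g \<and> f a = b"
proof -
  have Qt: "Q \<subseteq> topspace X" using Q(2) openin_subset by blast
  have Pt: "P \<subseteq> topspace X" using P(2) openin_subset by blast
  have "subtopology X P homeomorphic_space subtopology X Q"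
    by (rule SH_homeo[OF SH P _ Q]) (use a b in auto)
  then obtain \<phi> where \<phi>: "homeomorphic_map (subtopology X P) (subtopology X Q) \<phi>"
    unfolding homeomorphic_space by blast
  have "\<phi> ` topspace (subtopology X P) = topspace (subtopology X Q)"
    using homeomorphic_imp_surjective_map[OF \<phi>] .
  then have ca: "\<phi> a \<in> Q" using a Pt Qt by (auto simp: Int_absorb1 inf.absorb2)
  have SQ: "strongly_homogeneous (subtopology X Q)" using SH_subtopology[OF SH Q] .
  obtain k where k: "homeomorphic_map (subtopology X Q) (subtopology X Q) k" "k (\<phi> a) = b"
    using SH_homogeneous[OF SQ metrizable_space_subtopology[OF mX] dimension_le_subtopology[OF d0]]
      ca b Qt by (auto simp: Int_absorb1 inf.absorb2)
  have "homeomorphic_map (subtopology X P) (subtopology X Q) (k \<circ> \<phi>)"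
    using homeomorphic_map_compose[OF \<phi> k(1)] .
  then obtain g where "homeomorphic_maps (subtopology X P) (subtopology X Q) (k \<circ> \<phi>) g"
    unfolding homeomorphic_map_maps by blast
  then show ?thesis using k(2) by auto
qed



lemma partition2:
  assumes L: "Lindelof_space X" and d0: "X dim_le 0" and T1: "t1_space X"
    and noiso: "\<And>z. z \<in> topspace X \<Longrightarrow> \<not> openin X {z}"
    and A: "discrete_subset X A" and Ane: "A \<noteq> {}"
  obtains U R where "\<And>a. a \<in> A \<Longrightarrow> closedin X (U a)" "\<And>a. a \<in> A \<Longrightarrow> openin X (U a)"
    "\<And>a. a \<in> A \<Longrightarrow> a \<in> U a"
    "\<And>a b. a \<in> A \<Longrightarrow> b \<in> A \<Longrightarrow> a \<noteq> b \<Longrightarrow> U a \<inter> U b = {}"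
    "closedin X R" "openin X R" "R \<noteq> {}" "\<And>a. a \<in> A \<Longrightarrow> U a \<inter> R = {}"
    "topspace X \<subseteq> R \<union> \<Union>(U ` A)"
proof -
  have At: "A \<subseteq> topspace X" using A unfolding discrete_subset_def by (elim conjE)
  obtain c :: "nat \<Rightarrow> 'a set" where c: "\<And>n. closedin X (c n)" "\<And>n. openin X (c n)"
    "\<And>m n. m \<noteq> n \<Longrightarrow> c m \<inter> c n = {}" "\<And>z. z \<in> topspace X \<Longrightarrow> \<exists>n. z \<in> c n"
    "\<And>n a b. a \<in> c n \<inter> A \<Longrightarrow> b \<in> c n \<inter> A \<Longrightarrow> a = b"
    using clopen_partition[OF L d0 A] by metis
  define nn where "nn a = (SOME n. a \<in> c n)" for a
  have nn: "a \<in> c (nn a)" if "a \<in> A" for a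
    unfolding nn_def using c(4) At that by (metis someI_ex subsetD)
  define U0 where "U0 a = c (nn a)" for a
  have U0dis: "U0 a \<inter> U0 b = {}" if "a \<in> A" "b \<in> A" "a \<noteq> b" for a b
  proof (cases "nn a = nn b")
    case True
    have "a \<in> c (nn a) \<inter> A" "b \<in> c (nn a) \<inter> A" using nn that True by (auto, metis)
    then have "a = b" by (rule c(5))
    then show ?thesis using that(3) by blast
  next
    case False
    then show ?thesis unfolding U0_def using c(3) by blast
  qed
  obtain a0 where a0: "a0 \<in> A" using Ane by blast
  have a0t: "a0 \<in> topspace X" using a0 At by blast
  have "U0 a0 \<noteq> {a0}" using noiso[OF a0t] c(2) unfolding U0_def by metis
  then obtain q where q: "q \<in> U0 a0" "q \<noteq> a0" using nn[OF a0] unfolding U0_def by blast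
  have "openin X (U0 a0 - {a0})"
    using c(2) closedin_t1_singleton[OF T1 a0t] unfolding U0_def by (simp add: openin_diff)
  then obtain K where K: "closedin X K" "openin X K" "q \<in> K" "K \<subseteq> U0 a0 - {a0}"
    using dim0_clopen[OF d0 _ ] q by (metis Diff_iff empty_iff insert_iff)
  define R0 where "R0 = topspace X - \<Union>(U0 ` A)"
  have U0o: "openin X (U0 a)" for a unfolding U0_def using c(2) .
  have R0c: "closedin X R0" unfolding R0_def using U0o by (intro closedin_diff) auto
  have R0eq: "R0 = \<Union>{c n | n. c n \<inter> A = {}}"
  proof
    show "R0 \<subseteq> \<Union>{c n | n. c n \<inter> A = {}}"
    proof
      fix z assume z: "z \<in> R0"
      then obtain m where m: "z \<in> c m" using c(4) unfolding R0_def by blast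
      have "c m \<inter> A = {}"
      proof (rule ccontr)
        assume "c m \<inter> A \<noteq> {}"
        then obtain a where a: "a \<in> c m" "a \<in> A" by blast
        then have "nn a = m" using nn[OF a(2)] c(3) by blast
        then have "z \<in> U0 a" unfolding U0_def using m by simp
        then show False using z a(2) unfolding R0_def by blast
      qed
      then show "z \<in> \<Union>{c n | n. c n \<inter> A = {}}" using m by blast
    qed
  next
    show "\<Union>{c n | n. c n \<inter> A = {}} \<subseteq> R0"
    proof
      fix z assume "z \<in> \<Union>{c n | n. c n \<inter> A = {}}"
      then obtain m where m: "z \<in> c m" "c m \<inter> A = {}" by blast
      have zt: "z \<in> topspace X" using m(1) c(2) openin_subset by blast
      have "z \<notin> U0 a" if a: "a \<in> A" for a
      proof
        assume "z \<in> U0 a"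
        then have "nn a = m" using m(1) c(3) unfolding U0_def by blast
        then show False using nn[OF a] m(2) a by blast
      qed
      then show "z \<in> R0" unfolding R0_def using zt by blast
    qed
  qed
  have R0o: "openin X R0" unfolding R0eq using c(2) by blast
  define U where "U a = U0 a - K" for a
  define R where "R = R0 \<union> K"
  show ?thesis
  proof (rule that[of U R])
    show "closedin X (U a)" "openin X (U a)" if "a \<in> A" for a
      unfolding U_def U0_def using c(1,2) K(1,2) by (auto intro: closedin_diff openin_diff)
    show "a \<in> U a" if a: "a \<in> A" for a
    proof -
      have "a \<notin> K"
      proof
        assume aK: "a \<in> K"
        then have "a \<in> U0 a0" "a \<noteq> a0" using K(4) by auto
        then show False using U0dis[OF a a0] nn[OF a] unfolding U0_def by blast
      qed
      then show ?thesis unfolding U_def U0_def using nn[OF a] by blast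
    qed
    show "U a \<inter> U b = {}" if "a \<in> A" "b \<in> A" "a \<noteq> b" for a b
      using U0dis[OF that] unfolding U_def by blast
    show "closedin X R" unfolding R_def using R0c K(1) by blast
    show "openin X R" unfolding R_def using R0o K(2) by blast
    show "R \<noteq> {}" unfolding R_def using K(3) by blast
    show "U a \<inter> R = {}" if "a \<in> A" for a
      unfolding U_def R_def R0_def using that by blast
    show "topspace X \<subseteq> R \<union> \<Union>(U ` A)"
      unfolding U_def R_def R0_def by blast
  qed
qed


theorem mainTheorem3:
  fixes X :: "'a topology"
  assumes "strongly_homogeneous X"
    and "separable_space X"
    and "metrizable_space X"
    and "X dim_le 0"
  shows "strongly_discrete_homogeneous X"
  unfolding strongly_discrete_homogeneous_def
proof (intro conjI allI impI)
  note SH = assms(1) and sX = assms(2) and mX = assms(3) and d0 = assms(4)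
  show Hs: "Hausdorff_space X" using SH SH_Hausdorff by blast
  have T1: "t1_space X" using Hs Hausdorff_imp_t1_space by blast
  fix A B f
  assume hAB: "discrete_subset X A \<and> discrete_subset X B \<and> bij_betw f A B"
  then have dA: "discrete_subset X A" and dB: "discrete_subset X B" and bij: "bij_betw f A B" by auto
  have At: "A \<subseteq> topspace X" using dA unfolding discrete_subset_def by (elim conjE)
  have Bt: "B \<subseteq> topspace X" using dB unfolding discrete_subset_def by (elim conjE)
  have fAB: "f ` A = B" using bij_betw_imp_surj_on[OF bij] .
  have finj: "inj_on f A" using bij_betw_imp_inj_on[OF bij] .
  have idh: "homeomorphic_map X X id" by simp
  show "\<exists>h. homeomorphic_map X X h \<and> (\<forall>a\<in>A. h a = f a)"
  proof (cases "A = {}")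
    case True
    then show ?thesis using idh by blast
  next
    case Ane: False
    show ?thesis
    proof (cases "\<exists>p. topspace X = {p}")
      case True
      then obtain p where p: "topspace X = {p}" by blast
      have Ap: "A = {p}" using At Ane p subset_singleton_iff by metis
      have "B \<noteq> {}" using fAB Ane by blast
      then have Bp: "B = {p}" using Bt p subset_singleton_iff by metis
      have "f p = p" using fAB Ap Bp by auto
      then have "\<forall>a\<in>A. id a = f a" using Ap by simp
      then show ?thesis using idh by blast
    next
      case nsing: False
      have noiso: "\<not> openin X {z}" if "z \<in> topspace X" for z
      proof
        assume "openin X {z}"
        then have "topspace X = {z}" using SH_isolated[OF SH that] by blast
        then show False using nsing by blast
      qed
      have Bne: "B \<noteq> {}" using fAB Ane by blast
      have L: "Lindelof_space X" using sep_metrizable_Lindelof[OF sX mX] .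
      obtain U R where U: "\<And>a. a \<in> A \<Longrightarrow> closedin X (U a)" "\<And>a. a \<in> A \<Longrightarrow> openin X (U a)"
        "\<And>a. a \<in> A \<Longrightarrow> a \<in> U a"
        "\<And>a b. a \<in> A \<Longrightarrow> b \<in> A \<Longrightarrow> a \<noteq> b \<Longrightarrow> U a \<inter> U b = {}"
        and R: "closedin X R" "openin X R" "R \<noteq> {}" "\<And>a. a \<in> A \<Longrightarrow> U a \<inter> R = {}"
        and UR: "topspace X \<subseteq> R \<union> \<Union>(U ` A)"
        using partition2[OF L d0 T1 noiso dA Ane] by blast
      obtain V S where V: "\<And>a. a \<in> B \<Longrightarrow> closedin X (V a)" "\<And>a. a \<in> B \<Longrightarrow> openin X (V a)"
        "\<And>a. a \<in> B \<Longrightarrow> a \<in> V a"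
        "\<And>a b. a \<in> B \<Longrightarrow> b \<in> B \<Longrightarrow> a \<noteq> b \<Longrightarrow> V a \<inter> V b = {}"
        and S: "closedin X S" "openin X S" "S \<noteq> {}" "\<And>a. a \<in> B \<Longrightarrow> V a \<inter> S = {}"
        and VS: "topspace X \<subseteq> S \<union> \<Union>(V ` B)"
        using partition2[OF L d0 T1 noiso dB Bne] by blast
      define I where "I = insert None (Some ` A)"
      define D where "D i = (case i of None \<Rightarrow> R | Some a \<Rightarrow> U a)" for i
      define E where "E i = (case i of None \<Rightarrow> S | Some a \<Rightarrow> V (f a))" for i
      have fB: "f a \<in> B" if "a \<in> A" for a using fAB that by blast
      have Dcl: "closedin X (D i)" "openin X (D i)" if "i \<in> I" for i
        using that U R unfolding I_def D_def by auto
      have Ecl: "closedin X (E i)" "openin X (E i)" if "i \<in> I" for i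
        using that V S fB unfolding I_def E_def by auto
      have Dne: "D i \<noteq> {}" if "i \<in> I" for i
        using that U(3) R(3) unfolding I_def D_def by (auto, blast)
      have Ene: "E i \<noteq> {}" if "i \<in> I" for i
        using that V(3) S(3) fB unfolding I_def E_def by (auto, blast)
      have Dd: "D i \<inter> D j = {}" if ij: "i \<in> I" "j \<in> I" "i \<noteq> j" for i j
      proof (cases i)
        case None
        then obtain b where "j = Some b" "b \<in> A" using ij unfolding I_def by auto
        then show ?thesis using None R(4) unfolding D_def by auto
      next
        case (Some a)
        then have a: "a \<in> A" using ij unfolding I_def by auto
        show ?thesis
        proof (cases j)
          case None then show ?thesis using Some R(4)[OF a] unfolding D_def by auto
        next
          case (Some b)
          then have "b \<in> A" "a \<noteq> b" using ij \<open>i = Some a\<close> unfolding I_def by auto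
          then show ?thesis using U(4)[OF a] Some \<open>i = Some a\<close> unfolding D_def by auto
        qed
      qed
      have Ed: "E i \<inter> E j = {}" if ij: "i \<in> I" "j \<in> I" "i \<noteq> j" for i j
      proof (cases i)
        case None
        then obtain b where "j = Some b" "b \<in> A" using ij unfolding I_def by auto
        then show ?thesis using None S(4) fB unfolding E_def by auto
      next
        case (Some a)
        then have a: "a \<in> A" using ij unfolding I_def by auto
        show ?thesis
        proof (cases j)
          case None then show ?thesis using Some S(4)[OF fB[OF a]] unfolding E_def by auto
        next
          case (Some b)
          then have b: "b \<in> A" "a \<noteq> b" using ij \<open>i = Some a\<close> unfolding I_def by auto
          then have "f a \<noteq> f b" using finj a inj_on_def by metis
          then show ?thesis using V(4)[OF fB[OF a] fB[OF b(1)]] Some \<open>i = Some a\<close> unfolding E_def by auto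
        qed
      qed
      have Dc: "topspace X \<subseteq> \<Union>(D ` I)"
      proof
        fix z assume "z \<in> topspace X"
        then have "z \<in> R \<or> (\<exists>a\<in>A. z \<in> U a)" using UR by blast
        then show "z \<in> \<Union>(D ` I)"
        proof
          assume "z \<in> R" then show ?thesis unfolding I_def D_def by force
        next
          assume "\<exists>a\<in>A. z \<in> U a"
          then obtain a where "a \<in> A" "z \<in> U a" by blast
          then have "Some a \<in> I" "z \<in> D (Some a)" unfolding I_def D_def by auto
          then show ?thesis by blast
        qed
      qed
      have Ec: "topspace X \<subseteq> \<Union>(E ` I)"
      proof
        fix z assume "z \<in> topspace X"
        then have "z \<in> S \<or> (\<exists>b\<in>B. z \<in> V b)" using VS by blast
        then show "z \<in> \<Union>(E ` I)"
        proof
          assume "z \<in> S" then show ?thesis unfolding I_def E_def by force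
        next
          assume "\<exists>b\<in>B. z \<in> V b"
          then obtain b where "b \<in> B" "z \<in> V b" by blast
          then obtain a where "a \<in> A" "f a = b" using fAB by blast
          then have "Some a \<in> I" "z \<in> E (Some a)" unfolding I_def E_def using \<open>z \<in> V b\<close> by auto
          then show ?thesis by blast
        qed
      qed
      have "\<forall>i\<in>I. \<exists>p. homeomorphic_maps (subtopology X (D i)) (subtopology X (E i)) (fst p) (snd p)
               \<and> (\<forall>a. i = Some a \<longrightarrow> fst p a = f a)"
      proof
        fix i assume i: "i \<in> I"
        show "\<exists>p. homeomorphic_maps (subtopology X (D i)) (subtopology X (E i)) (fst p) (snd p)
               \<and> (\<forall>a. i = Some a \<longrightarrow> fst p a = f a)"
        proof (cases i)
          case None
          have "subtopology X (D i) homeomorphic_space subtopology X (E i)"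
            using SH_homeo[OF SH Dcl[OF i] Dne[OF i] Ecl[OF i] Ene[OF i]] .
          then obtain p q where "homeomorphic_maps (subtopology X (D i)) (subtopology X (E i)) p q"
            unfolding homeomorphic_space_def by blast
          then show ?thesis using None by (intro exI[of _ "(p, q)"]) auto
        next
          case (Some a)
          then have a: "a \<in> A" using i unfolding I_def by auto
          have "a \<in> D i" "f a \<in> E i" using Some U(3)[OF a] V(3)[OF fB[OF a]] unfolding D_def E_def by auto
          then obtain p q where "homeomorphic_maps (subtopology X (D i)) (subtopology X (E i)) p q" "p a = f a"
            using homeo_pt[OF SH mX d0 Dcl[OF i] Ecl[OF i]] by blast
          then show ?thesis using Some by (intro exI[of _ "(p, q)"]) auto
        qed
      qed
      from bchoice[OF this] obtain F where F0: "\<forall>i\<in>I. homeomorphic_maps (subtopology X (D i)) (subtopology X (E i)) (fst (F i)) (snd (F i))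
               \<and> (\<forall>a. i = Some a \<longrightarrow> fst (F i) a = f a)" by (elim exE)
      have F: "homeomorphic_maps (subtopology X (D i)) (subtopology X (E i)) (fst (F i)) (snd (F i))
               \<and> (\<forall>a. i = Some a \<longrightarrow> fst (F i) a = f a)" if "i \<in> I" for i
        using F0 that by (rule bspec)
      have hm: "homeomorphic_maps X X (\<lambda>z. (\<lambda>i. fst (F i)) (SOME i. i \<in> I \<and> z \<in> D i) z) (\<lambda>z. (\<lambda>i. snd (F i)) (SOME i. i \<in> I \<and> z \<in> E i) z)"
        by (rule glue_partition[OF Dcl(2) Dd Dc Ecl(2) Ed Ec]) (use F in blast)+
      have "homeomorphic_map X X (\<lambda>z. fst (F (SOME i. i \<in> I \<and> z \<in> D i)) z)"
        using hm unfolding homeomorphic_map_maps by blast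
      moreover have "fst (F (SOME i. i \<in> I \<and> a \<in> D i)) a = f a" if a: "a \<in> A" for a
      proof -
        have "Some a \<in> I" "a \<in> D (Some a)" using a U(3)[OF a] unfolding I_def D_def by auto
        then have "(SOME i. i \<in> I \<and> a \<in> D i) = Some a"
          using some_unique[of I D "Some a" a, OF Dd] by blast
        then show ?thesis using F[OF \<open>Some a \<in> I\<close>] by simp
      qed
      ultimately show ?thesis by blast
    qed
  qed
qed


end
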